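(* Let $V$ be a real sequence with $\liminf_{n\to\infty}V_n>C>0$, fix a positive integer $m$, and let $\varphi^-$ be the subdominant solution of $(-\Delta+V)\varphi=0$. Then, with $K_A:=\sqrt{1+\left(\frac{2}{C(C+2)}\right)^2}+\frac{2}{C(C+2)}$: (a) $\left(\prod_{\ell=m}^n\frac{V_\ell+2}{K_A}\right)\varphi^-_n\in\ell^\infty$ (as a sequence in $n$); (b) if in addition $V_{n+1}-V_n\in\ell^1$, then $\left(\prod_{\ell=m}^n\frac{V_\ell+2+\sqrt{V_\ell(V_\ell+4)}}{2}\right)\varphi^-_n\in\ell^\infty$.
   Context: $(\Delta f)_n=f_{n+1}+f_{n-1}-2f_n$; $(-\Delta+V)\varphi=0$ means $-\varphi_{n+1}-\varphi_{n-1}+(2+V_n)\varphi_n=0$. The subdominant solution is a nonzero solution decreasing to $0$ at infinity (square-summable), unique up to a multiplicative constant. *)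

theory Defs
  imports "HOL-Analysis.Analysis"
begin

text \<open>Solutions of (-Delta + V) phi = 0 on the half-line: the recurrence
  -phi(n+1) - phi(n-1) + (2 + V n) phi n = 0 for all n >= 1.\<close>
definition is_solution :: "(nat \<Rightarrow> real) \<Rightarrow> (nat \<Rightarrow> real) \<Rightarrow> bool" where
  "is_solution V \<phi> \<longleftrightarrow>
     (\<forall>n\<ge>1. - \<phi> (Suc n) - \<phi> (n - 1) + (2 + V n) * \<phi> n = 0)"

definition subdominant :: "(nat \<Rightarrow> real) \<Rightarrow> (nat \<Rightarrow> real) \<Rightarrow> bool" where
  "subdominant V \<phi> \<longleftrightarrow> is_solution V \<phi> \<and> (\<exists>n. \<phi> n \<noteq> 0) \<and> summable (\<lambda>n. (\<phi> n)\<^sup>2)"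

end

theory Submission
  imports Defs
begin

lemma rec_step:
  assumes "is_solution V \<phi>"
  shows "\<phi> (Suc (Suc j)) = (2 + V (Suc j)) * \<phi> (Suc j) - \<phi> j"
proof -
  have "- \<phi> (Suc (Suc j)) - \<phi> (Suc j - 1) + (2 + V (Suc j)) * \<phi> (Suc j) = 0"
    using assms unfolding is_solution_def by (elim allE[of _ "Suc j"]) simp
  then show ?thesis by simp
qed

lemma mono_abs:
  assumes sol: "is_solution V \<phi>" and sm: "summable (\<lambda>n. (\<phi> n)\<^sup>2)"
    and pos: "\<And>n. n \<ge> N \<Longrightarrow> V n > 0" and nN: "n \<ge> N"
  shows "\<bar>\<phi> (Suc n)\<bar> \<le> \<bar>\<phi> n\<bar>"
proof (rule ccontr)
  assume "\<not> ?thesis"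
  hence h: "\<bar>\<phi> n\<bar> < \<bar>\<phi> (Suc n)\<bar>" by simp
  have claim: "\<bar>\<phi> (n+k)\<bar> < \<bar>\<phi> (Suc (n+k))\<bar> \<and> \<bar>\<phi> (Suc n)\<bar> \<le> \<bar>\<phi> (Suc (n+k))\<bar>" for k
  proof (induction k)
    case 0 then show ?case using h by simp
  next
    case (Suc k)
    define j where "j = n + k"
    have v: "V (Suc j) > 0" by (rule pos) (use nN j_def in simp)
    have r: "\<phi> (Suc (Suc j)) = (2 + V (Suc j)) * \<phi> (Suc j) - \<phi> j" by (rule rec_step[OF sol])
    have IH: "\<bar>\<phi> j\<bar> < \<bar>\<phi> (Suc j)\<bar>" "\<bar>\<phi> (Suc n)\<bar> \<le> \<bar>\<phi> (Suc j)\<bar>" using Suc j_def by auto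
    have "\<bar>\<phi> (Suc (Suc j))\<bar> \<ge> (2 + V (Suc j)) * \<bar>\<phi> (Suc j)\<bar> - \<bar>\<phi> j\<bar>"
    proof -
      have a: "\<bar>(2 + V (Suc j)) * \<phi> (Suc j)\<bar> = (2 + V (Suc j)) * \<bar>\<phi> (Suc j)\<bar>"
        using v by (simp add: abs_mult)
      have "\<bar>(2 + V (Suc j)) * \<phi> (Suc j)\<bar> - \<bar>\<phi> j\<bar> \<le> \<bar>(2 + V (Suc j)) * \<phi> (Suc j) - \<phi> j\<bar>"
        by (rule abs_triangle_ineq2)
      then show ?thesis using a r by simp
    qed
    moreover have "(2 + V (Suc j)) * \<bar>\<phi> (Suc j)\<bar> \<ge> 2 * \<bar>\<phi> (Suc j)\<bar>"
      by (rule mult_right_mono) (use v in auto)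
    ultimately have "\<bar>\<phi> (Suc j)\<bar> < \<bar>\<phi> (Suc (Suc j))\<bar>" using IH by linarith
    then show ?case using IH j_def by simp
  qed
  define c where "c = \<bar>\<phi> (Suc n)\<bar>"
  have c0: "c > 0" using h c_def by linarith
  have "(\<lambda>n. (\<phi> n)\<^sup>2) \<longlonglongrightarrow> 0" using summable_LIMSEQ_zero[OF sm] .
  hence "eventually (\<lambda>n. (\<phi> n)\<^sup>2 < c\<^sup>2) sequentially"
    by (rule order_tendstoD(2)) (use c0 in auto)
  then obtain M where M: "\<And>k. k \<ge> M \<Longrightarrow> (\<phi> k)\<^sup>2 < c\<^sup>2" by (auto simp: eventually_sequentially)
  have "c \<le> \<bar>\<phi> (Suc (n + M))\<bar>" using claim[of M] c_def by simp
  hence "c\<^sup>2 \<le> \<bar>\<phi> (Suc (n + M))\<bar>\<^sup>2" using c0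
    by (intro power_mono) auto
  hence "c\<^sup>2 \<le> (\<phi> (Suc (n + M)))\<^sup>2" by simp
  moreover have "(\<phi> (Suc (n + M)))\<^sup>2 < c\<^sup>2" by (rule M) simp
  ultimately show False by linarith
qed

lemma nonzero:
  assumes sol: "is_solution V \<phi>" and nz: "\<exists>n. \<phi> n \<noteq> 0"
    and mono: "\<And>n. n \<ge> N \<Longrightarrow> \<bar>\<phi> (Suc n)\<bar> \<le> \<bar>\<phi> n\<bar>" and nN: "n \<ge> N"
  shows "\<phi> n \<noteq> 0"
proof
  assume z: "\<phi> n = 0"
  have fw: "k \<ge> n \<Longrightarrow> \<phi> k = 0" for k
  proof (induction k rule: dec_induct)
    case base then show ?case using z .
  next
    case (step k) then show ?case using mono[of k] nN by simp
  qed
  have bw: "t \<le> n \<longrightarrow> \<phi> (n - t) = 0 \<and> \<phi> (Suc (n - t)) = 0" for t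
  proof (induction t)
    case 0 then show ?case using fw z by simp
  next
    case (Suc t)
    show ?case
    proof
      assume st: "Suc t \<le> n"
      define i where "i = n - Suc t"
      have e1: "Suc i = n - t" using st i_def by simp
      have h: "\<phi> (Suc i) = 0 \<and> \<phi> (Suc (Suc i)) = 0" using Suc st e1 by simp
      have "\<phi> (Suc (Suc i)) = (2 + V (Suc i)) * \<phi> (Suc i) - \<phi> i" by (rule rec_step[OF sol])
      hence "\<phi> i = 0" using h by simp
      then show "\<phi> (n - Suc t) = 0 \<and> \<phi> (Suc (n - Suc t)) = 0" using h i_def e1 by simp
    qed
  qed
  have "\<phi> k = 0" for k
  proof (cases "k \<le> n")
    case True then show ?thesis using bw[of "n - k"] by simp
  next
    case False then show ?thesis using fw by simp
  qed
  then show False using nz by simp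
qed

lemma bseq_growth:
  fixes f g :: "nat \<Rightarrow> real"
  assumes step: "\<And>n. n \<ge> N \<Longrightarrow> \<bar>f (Suc n)\<bar> \<le> exp (g n) * \<bar>f n\<bar>"
    and sb: "\<And>k. (\<Sum>i\<in>{N..<k}. g i) \<le> B"
  shows "Bseq f"
proof -
  have ind: "n \<ge> N \<Longrightarrow> \<bar>f n\<bar> \<le> \<bar>f N\<bar> * exp (\<Sum>i\<in>{N..<n}. g i)" for n
  proof (induction n rule: dec_induct)
    case base then show ?case by simp
  next
    case (step n)
    have "\<bar>f (Suc n)\<bar> \<le> exp (g n) * \<bar>f n\<bar>" using assms(1) step by simp
    also have "\<dots> \<le> exp (g n) * (\<bar>f N\<bar> * exp (\<Sum>i\<in>{N..<n}. g i))"
      using step by (intro mult_left_mono) auto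
    also have "\<dots> = \<bar>f N\<bar> * exp (\<Sum>i\<in>{N..<Suc n}. g i)"
      using step by (simp add: exp_add sum.atLeastLessThan_Suc)
    finally show ?case .
  qed
  define M where "M = max (Max ((\<lambda>n. \<bar>f n\<bar>) ` {..N})) (\<bar>f N\<bar> * exp B)"
  have "\<bar>f n\<bar> \<le> M" for n
  proof (cases "n \<le> N")
    case True
    then show ?thesis unfolding M_def by (intro max.coboundedI1 Max_ge) auto
  next
    case False
    then have "\<bar>f n\<bar> \<le> \<bar>f N\<bar> * exp (\<Sum>i\<in>{N..<n}. g i)" using ind by simp
    also have "\<dots> \<le> \<bar>f N\<bar> * exp B" using sb by (intro mult_left_mono) auto
    finally show ?thesis unfolding M_def by simp
  qed
  then show ?thesis by (intro BseqI'[of _ M]) simp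
qed


theorem corollary5:
  fixes V \<phi> :: "nat \<Rightarrow> real" and C :: real and m :: nat
  assumes "0 < C"
    and "ereal C < liminf (\<lambda>n. ereal (V n))"
    and "m \<ge> 1"
    and "subdominant V \<phi>"
  defines "K \<equiv> sqrt (1 + (2 / (C * (C + 2)))\<^sup>2) + 2 / (C * (C + 2))"
  shows "Bseq (\<lambda>n. (\<Prod>l=m..n. (V l + 2) / K) * \<phi> n) \<and>
         (summable (\<lambda>n. \<bar>V (Suc n) - V n\<bar>) \<longrightarrow>
         Bseq (\<lambda>n. (\<Prod>l=m..n. (V l + 2 + sqrt (V l * (V l + 4))) / 2) * \<phi> n))"
proof -
  have C0: "0 < C" by fact
  from assms(2) have "eventually (\<lambda>n. ereal C < ereal (V n)) sequentially" by (rule less_LiminfD)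
  then obtain N0 where N0: "\<And>n. n \<ge> N0 \<Longrightarrow> C < V n" by (auto simp: eventually_sequentially)
  define N where "N = max N0 m"
  have VN: "C < V n" if "n \<ge> N" for n using N0 that N_def by auto
  have Nm: "N \<ge> m" by (simp add: N_def)
  have pos: "V n > 0" if "n \<ge> N" for n using VN[OF that] C0 by linarith
  have sol: "is_solution V \<phi>" and nz: "\<exists>n. \<phi> n \<noteq> 0" and sm: "summable (\<lambda>n. (\<phi> n)\<^sup>2)"
    using assms(4) unfolding subdominant_def by auto
  have mono: "\<bar>\<phi> (Suc n)\<bar> \<le> \<bar>\<phi> n\<bar>" if "n \<ge> N" for n
    by (rule mono_abs[OF sol sm pos that]) 
  have dec: "\<bar>\<phi> (Suc n)\<bar> * (C + 1) \<le> \<bar>\<phi> n\<bar>" if "n \<ge> N" for n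
  proof -
    have vS: "V (Suc n) > C" using VN that by simp
    have r: "\<phi> (Suc (Suc n)) = (2 + V (Suc n)) * \<phi> (Suc n) - \<phi> n" by (rule rec_step[OF sol])
    have a: "\<bar>(2 + V (Suc n)) * \<phi> (Suc n)\<bar> = (2 + V (Suc n)) * \<bar>\<phi> (Suc n)\<bar>"
      using vS C0 by (simp add: abs_mult)
    have t: "\<bar>(2 + V (Suc n)) * \<phi> (Suc n)\<bar> - \<bar>\<phi> (Suc (Suc n))\<bar> \<le> \<bar>(2 + V (Suc n)) * \<phi> (Suc n) - \<phi> (Suc (Suc n))\<bar>"
      by (rule abs_triangle_ineq2)
    have e: "(2 + V (Suc n)) * \<phi> (Suc n) - \<phi> (Suc (Suc n)) = \<phi> n" using r by simp
    have m1: "\<bar>\<phi> (Suc (Suc n))\<bar> \<le> \<bar>\<phi> (Suc n)\<bar>" using mono[of "Suc n"] that by simp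
    have m2: "(C + 1) * \<bar>\<phi> (Suc n)\<bar> \<le> (V (Suc n) + 1) * \<bar>\<phi> (Suc n)\<bar>"
      by (rule mult_right_mono) (use vS in auto)
    have m3: "(2 + V (Suc n)) * \<bar>\<phi> (Suc n)\<bar> = (V (Suc n) + 1) * \<bar>\<phi> (Suc n)\<bar> + \<bar>\<phi> (Suc n)\<bar>"
      by (simp add: algebra_simps)
    have m4: "\<bar>\<phi> (Suc n)\<bar> * (C + 1) = (C + 1) * \<bar>\<phi> (Suc n)\<bar>" by simp
    show ?thesis using a t e m1 m2 m3 m4 by linarith
  qed
  have partA: "Bseq (\<lambda>n. (\<Prod>l=m..n. (V l + 2) / K) * \<phi> n)"
  proof -
    define x where "x = 2 / (C * (C + 2))"
    have x0: "x > 0" unfolding x_def using C0 by simp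
    have s1: "1 \<le> sqrt (1 + x\<^sup>2)" using real_sqrt_le_mono[of 1 "1 + x\<^sup>2"] by simp
    have Kx: "K \<ge> 1 + x" unfolding K_def x_def[symmetric] using s1 by linarith
    have K0: "K > 0" using Kx x0 by linarith
    have cc: "C * (C + 2) \<le> 2 * (C + 1)\<^sup>2"
    proof -
      have "0 \<le> C * C" by simp
      then show ?thesis using C0 by (simp add: power2_eq_square algebra_simps)
    qed
    have q1: "1 / (C + 1)\<^sup>2 \<le> x" unfolding x_def using C0 cc
      by (simp add: divide_simps)
    have stepA: "(V (Suc n) + 2) * \<bar>\<phi> (Suc n)\<bar> \<le> K * \<bar>\<phi> n\<bar>" if "n \<ge> N" for n
    proof -
      have vS: "V (Suc n) > C" using VN that by simp
      have r: "\<phi> (Suc (Suc n)) = (2 + V (Suc n)) * \<phi> (Suc n) - \<phi> n" by (rule rec_step[OF sol])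
      have e: "(V (Suc n) + 2) * \<phi> (Suc n) = \<phi> (Suc (Suc n)) + \<phi> n" using r by simp
      have a: "\<bar>(V (Suc n) + 2) * \<phi> (Suc n)\<bar> = (V (Suc n) + 2) * \<bar>\<phi> (Suc n)\<bar>"
        using vS C0 by (simp add: abs_mult)
      have d1: "\<bar>\<phi> (Suc (Suc n))\<bar> * (C + 1) \<le> \<bar>\<phi> (Suc n)\<bar>" using dec[of "Suc n"] that by simp
      have d2: "\<bar>\<phi> (Suc n)\<bar> * (C + 1) \<le> \<bar>\<phi> n\<bar>" using dec[of n] that by simp
      have "\<bar>\<phi> (Suc (Suc n))\<bar> * (C + 1) * (C + 1) \<le> \<bar>\<phi> (Suc n)\<bar> * (C + 1)"
        using d1 C0 by (intro mult_right_mono) auto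
      hence d3: "\<bar>\<phi> (Suc (Suc n))\<bar> * (C + 1)\<^sup>2 \<le> \<bar>\<phi> n\<bar>" using d2
        by (simp add: power2_eq_square mult.assoc)
      have "\<bar>\<phi> (Suc (Suc n))\<bar> \<le> \<bar>\<phi> n\<bar> * (1 / (C + 1)\<^sup>2)"
        using d3 C0 by (simp add: field_simps)
      also have "\<dots> \<le> \<bar>\<phi> n\<bar> * x" using q1 by (intro mult_left_mono) auto
      also have "\<dots> \<le> \<bar>\<phi> n\<bar> * (K - 1)" using Kx by (intro mult_left_mono) auto
      finally have d4: "\<bar>\<phi> (Suc (Suc n))\<bar> \<le> \<bar>\<phi> n\<bar> * (K - 1)" .
      have "\<bar>\<phi> (Suc (Suc n)) + \<phi> n\<bar> \<le> \<bar>\<phi> (Suc (Suc n))\<bar> + \<bar>\<phi> n\<bar>" by (rule abs_triangle_ineq)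
      hence "(V (Suc n) + 2) * \<bar>\<phi> (Suc n)\<bar> \<le> \<bar>\<phi> n\<bar> * (K - 1) + \<bar>\<phi> n\<bar>"
        using a e d4 by linarith
      then show ?thesis by (simp add: algebra_simps)
    qed
    show ?thesis
    proof (rule bseq_growth[where N=N and g="\<lambda>_. 0" and B=0])
      fix n assume nN: "n \<ge> N"
      define P where "P = (\<Prod>l=m..n. (V l + 2) / K)"
      have "(\<Prod>l=m..Suc n. (V l + 2) / K) = P * ((V (Suc n) + 2) / K)"
        using nN Nm unfolding P_def by simp
      hence "\<bar>(\<Prod>l=m..Suc n. (V l + 2) / K) * \<phi> (Suc n)\<bar> = \<bar>P\<bar> * (((V (Suc n) + 2) * \<bar>\<phi> (Suc n)\<bar>) / K)"
        using K0 VN[of "Suc n"] nN C0 by (simp add: abs_mult)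
      also have "\<dots> \<le> \<bar>P\<bar> * ((K * \<bar>\<phi> n\<bar>) / K)"
        using stepA[OF nN] K0 by (intro mult_left_mono divide_right_mono) auto
      also have "\<dots> = \<bar>P * \<phi> n\<bar>" using K0 by (simp add: abs_mult)
      finally show "\<bar>(\<Prod>l=m..Suc n. (V l + 2) / K) * \<phi> (Suc n)\<bar> \<le> exp 0 * \<bar>(\<Prod>l=m..n. (V l + 2) / K) * \<phi> n\<bar>"
        unfolding P_def by simp
    qed simp
  qed
  have partB: "Bseq (\<lambda>n. (\<Prod>l=m..n. (V l + 2 + sqrt (V l * (V l + 4))) / 2) * \<phi> n)"
    if sV: "summable (\<lambda>n. \<bar>V (Suc n) - V n\<bar>)"
  proof -
    define lam where "lam = (\<lambda>l. (V l + 2 + sqrt (V l * (V l + 4))) / 2)"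
    define mu where "mu = (\<lambda>l. V l + 2 - lam l)"
    have lm: "lam l * mu l = 1" if "l \<ge> N" for l
    proof -
      define s where "s = sqrt (V l * (V l + 4))"
      have "V l * (V l + 4) \<ge> 0" using pos[OF that] by (intro mult_nonneg_nonneg) auto
      hence s2: "s * s = V l * (V l + 4)" unfolding s_def by simp
      have "lam l * mu l = ((V l + 2) * (V l + 2) - s * s) / 4"
        unfolding mu_def lam_def s_def[symmetric] by (simp add: field_simps)
      also have "\<dots> = 1" using s2 by (simp add: algebra_simps)
      finally show ?thesis .
    qed
    have lam1: "lam l \<ge> 1" if "l \<ge> N" for l
    proof -
      have "V l * (V l + 4) \<ge> 0" using pos[OF that] by (intro mult_nonneg_nonneg) auto
      hence "sqrt (V l * (V l + 4)) \<ge> 0" by simp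
      then show ?thesis using pos[OF that] unfolding lam_def by (simp add: field_simps)
    qed
    have mu_pos: "mu l > 0" if "l \<ge> N" for l
    proof -
      have "mu l = 1 / lam l" using lm[OF that] lam1[OF that] by (simp add: eq_divide_eq mult.commute)
      then show ?thesis using lam1[OF that] by simp
    qed
    have mu1: "mu l \<le> 1" if "l \<ge> N" for l
    proof (rule ccontr)
      assume "\<not> mu l \<le> 1"
      hence "lam l * 1 < lam l * mu l" using lam1[OF that] by (intro mult_strict_left_mono) auto
      then show False using lm[OF that] lam1[OF that] by simp
    qed
    have lamX: "lam l = V l + 2 - mu l" for l unfolding mu_def by simp
    have lamC: "lam l \<ge> C + 1" if "l \<ge> N" for l using lamX[of l] mu1[OF that] VN[OF that] by linarith
    define p2 where "p2 = (C + 1)\<^sup>2"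
    have p2e: "p2 = C * C + 2 * C + 1" unfolding p2_def by (simp add: power2_eq_square algebra_simps)
    have p2g: "p2 > 1" using p2e C0 mult_pos_pos[OF C0 C0] by linarith
    define T where "T = (\<Sum>n. \<bar>V (Suc n) - V n\<bar>)"
    have Vb: "\<bar>V n\<bar> \<le> \<bar>V 0\<bar> + T" for n
    proof -
      have "V n - V 0 = (\<Sum>i<n. V (Suc i) - V i)" by (simp add: sum_lessThan_telescope)
      hence "\<bar>V n - V 0\<bar> \<le> (\<Sum>i<n. \<bar>V (Suc i) - V i\<bar>)" by (simp add: sum_abs)
      also have "\<dots> \<le> T" unfolding T_def by (rule sum_le_suminf[OF sV]) auto
      finally show ?thesis by linarith
    qed
    define Lam where "Lam = \<bar>V 0\<bar> + T + 2"
    have lamL: "lam l \<le> Lam" if "l \<ge> N" for l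
      using lamX[of l] mu_pos[OF that] Vb[of l] unfolding Lam_def by linarith
    have Lam0: "Lam \<ge> 0" using lamL[of N] lam1[of N] by simp
    have nzN: "\<phi> n \<noteq> 0" if "n \<ge> N" for n by (rule nonzero[OF sol nz mono that])
    define r where "r = (\<lambda>n. \<phi> (Suc n) / \<phi> n)"
    have r1: "\<bar>r n\<bar> \<le> 1" if "n \<ge> N" for n
      using mono[OF that] nzN[OF that] unfolding r_def by (simp add: abs_divide divide_le_eq_1)
    define e where "e = (\<lambda>n. \<bar>r n - mu (Suc n)\<bar>)"
    define d where "d = (\<lambda>n. \<bar>mu (Suc (Suc n)) - mu (Suc n)\<bar>)"
    have e2: "e n \<le> 2" if "n \<ge> N" for n
      using r1[OF that] mu_pos[of "Suc n"] mu1[of "Suc n"] that unfolding e_def by auto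
    have e0: "e n \<ge> 0" for n unfolding e_def by simp
    have contr: "e j * p2 \<le> e (Suc j) + d j" if jN: "j \<ge> N" for j
    proof -
      have jN': "Suc j \<ge> N" using jN by simp
      have n0: "\<phi> j \<noteq> 0" "\<phi> (Suc j) \<noteq> 0" using nzN jN jN' by auto
      have rec: "\<phi> (Suc (Suc j)) = (2 + V (Suc j)) * \<phi> (Suc j) - \<phi> j" by (rule rec_step[OF sol])
      have rS: "\<phi> (Suc (Suc j)) = r (Suc j) * \<phi> (Suc j)" using n0 unfolding r_def by simp
      define X where "X = V (Suc j) + 2 - r (Suc j)"
      have phj: "\<phi> j = X * \<phi> (Suc j)" using rec rS unfolding X_def by (simp add: algebra_simps)
      have XC: "X \<ge> C + 1" using r1[OF jN'] VN[OF jN'] unfolding X_def by linarith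
      have X0: "X \<noteq> 0" using XC C0 by linarith
      have rj: "r j * X = 1" using phj n0 X0 unfolding r_def by (simp add: field_simps)
      define X' where "X' = lam (Suc j)"
      have mX: "mu (Suc j) * X' = 1" using lm[OF jN'] unfolding X'_def by (simp add: mult.commute)
      have X'C: "X' \<ge> C + 1" using lamC[OF jN'] unfolding X'_def .
      have X'e: "X' = V (Suc j) + 2 - mu (Suc j)" unfolding X'_def by (rule lamX)
      have "(r j - mu (Suc j)) * (X * X') = (r j * X) * X' - (mu (Suc j) * X') * X"
        by (simp add: algebra_simps)
      also have "\<dots> = X' - X" using rj mX by simp
      also have "\<dots> = r (Suc j) - mu (Suc j)" unfolding X_def X'e by simp
      finally have key: "(r j - mu (Suc j)) * (X * X') = r (Suc j) - mu (Suc j)" .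
      have XX: "p2 \<le> X * X'" unfolding p2_def power2_eq_square
        using XC X'C C0 by (intro mult_mono) auto
      have "e j * p2 \<le> e j * (X * X')" using XX e0[of j] by (intro mult_left_mono) auto
      also have "\<dots> = \<bar>r (Suc j) - mu (Suc j)\<bar>"
      proof -
        have XX0: "X * X' > 0" using XC X'C C0 by (intro mult_pos_pos) auto
        have "\<bar>(r j - mu (Suc j)) * (X * X')\<bar> = \<bar>r j - mu (Suc j)\<bar> * (X * X')"
          using XC X'C C0 by (simp add: abs_mult)
        then show ?thesis using key unfolding e_def by simp
      qed
      also have "\<dots> \<le> \<bar>r (Suc j) - mu (Suc (Suc j))\<bar> + \<bar>mu (Suc (Suc j)) - mu (Suc j)\<bar>"
        using abs_triangle_ineq[of "r (Suc j) - mu (Suc (Suc j))" "mu (Suc (Suc j)) - mu (Suc j)"] by simp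
      also have "\<dots> = e (Suc j) + d j" unfolding e_def d_def by simp
      finally show ?thesis .
    qed
    have dL: "d j * (p2 - 1) \<le> \<bar>V (Suc (Suc j)) - V (Suc j)\<bar>" if jN: "j \<ge> N" for j
    proof -
      have i1: "Suc (Suc j) \<ge> N" and k1: "Suc j \<ge> N" using jN by auto
      define a where "a = mu (Suc (Suc j))"
      define b where "b = mu (Suc j)"
      define la where "la = lam (Suc (Suc j))"
      define lb where "lb = lam (Suc j)"
      have ha: "a * la = 1" using lm[OF i1] unfolding a_def la_def by (simp add: mult.commute)
      have hb: "b * lb = 1" using lm[OF k1] unfolding b_def lb_def by (simp add: mult.commute)
      have ea: "la = V (Suc (Suc j)) + 2 - a" unfolding la_def a_def by (rule lamX)
      have eb: "lb = V (Suc j) + 2 - b" unfolding lb_def b_def by (rule lamX)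
      have "(a - b) * (la * lb) = (a * la) * lb - (b * lb) * la" by (simp add: algebra_simps)
      also have "\<dots> = lb - la" using ha hb by simp
      finally have k0: "(a - b) * (la * lb) = lb - la" .
      have "(a - b) * (la * lb - 1) = (a - b) * (la * lb) - (a - b)" by (simp add: algebra_simps)
      also have "\<dots> = lb - la - (a - b)" using k0 by simp
      also have "\<dots> = V (Suc j) - V (Suc (Suc j))" using ea eb by simp
      finally have key: "(a - b) * (la * lb - 1) = V (Suc j) - V (Suc (Suc j))" .
      have LL: "p2 \<le> la * lb" unfolding p2_def power2_eq_square la_def lb_def
        using lamC[OF i1] lamC[OF k1] C0 by (intro mult_mono) auto
      have "d j * (p2 - 1) \<le> d j * (la * lb - 1)"
        using LL unfolding d_def by (intro mult_left_mono) auto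
      also have "\<dots> = \<bar>(a - b) * (la * lb - 1)\<bar>" using LL p2g unfolding d_def a_def b_def
        by (simp add: abs_mult)
      also have "\<dots> = \<bar>V (Suc (Suc j)) - V (Suc j)\<bar>" using key by simp
      finally show ?thesis .
    qed
    define T' where "T' = (\<Sum>j. \<bar>V (Suc (Suc j)) - V (Suc j)\<bar>)"
    have sV': "summable (\<lambda>j. \<bar>V (Suc (Suc j)) - V (Suc j)\<bar>)" using summable_Suc_iff[where f="\<lambda>n. \<bar>V (Suc n) - V n\<bar>"] sV by simp
    have dsum: "(\<Sum>j\<in>{N..<k}. d j) * (p2 - 1) \<le> T'" for k
    proof -
      have "(\<Sum>j\<in>{N..<k}. d j) * (p2 - 1) = (\<Sum>j\<in>{N..<k}. d j * (p2 - 1))" by (simp add: sum_distrib_right)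
      also have "\<dots> \<le> (\<Sum>j\<in>{N..<k}. \<bar>V (Suc (Suc j)) - V (Suc j)\<bar>)" using dL by (intro sum_mono) auto
      also have "\<dots> \<le> T'" unfolding T'_def by (rule sum_le_suminf[OF sV']) auto
      finally show ?thesis .
    qed
    have inv: "(p2 - 1) * (\<Sum>j\<in>{N..<k}. e j) + e N \<le> e k + (\<Sum>j\<in>{N..<k}. d j)" if "k \<ge> N" for k
      using that
    proof (induction k rule: dec_induct)
      case base then show ?case by simp
    next
      case (step k)
      have "(p2 - 1) * (\<Sum>j\<in>{N..<Suc k}. e j) + e N = (p2 - 1) * (\<Sum>j\<in>{N..<k}. e j) + e N + (p2 - 1) * e k"
        using step by (simp add: sum.atLeastLessThan_Suc algebra_simps)
      also have "\<dots> \<le> e k + (\<Sum>j\<in>{N..<k}. d j) + (p2 - 1) * e k" using step by simp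
      also have "\<dots> = e k * p2 + (\<Sum>j\<in>{N..<k}. d j)" by (simp add: algebra_simps)
      also have "\<dots> \<le> e (Suc k) + d k + (\<Sum>j\<in>{N..<k}. d j)" using contr[OF step(1)] by simp
      also have "\<dots> = e (Suc k) + (\<Sum>j\<in>{N..<Suc k}. d j)" using step by (simp add: sum.atLeastLessThan_Suc)
      finally show ?case .
    qed
    define B where "B = (2 + T' / (p2 - 1)) / (p2 - 1)"
    have T'0: "T' \<ge> 0" unfolding T'_def by (rule suminf_nonneg[OF sV']) simp
    have B0: "B \<ge> 0" unfolding B_def using T'0 p2g by simp
    have esum: "(\<Sum>j\<in>{N..<k}. e j) \<le> B" for k
    proof (cases "k \<ge> N")
      case False then show ?thesis using B0 by simp
    next
      case True
      have ds: "(\<Sum>j\<in>{N..<k}. d j) \<le> T' / (p2 - 1)" using dsum[of k] p2g by (simp add: le_divide_eq)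
      have "(p2 - 1) * (\<Sum>j\<in>{N..<k}. e j) \<le> 2 + T' / (p2 - 1)"
        using inv[OF True] e2[OF True] e0[of N] ds by linarith
      then show ?thesis unfolding B_def using p2g by (simp add: le_divide_eq mult.commute)
    qed
    have Bseq2: "Bseq (\<lambda>n. (\<Prod>l=m..n. lam l) * \<phi> n)"
    proof (rule bseq_growth[where N=N and g="\<lambda>n. Lam * e n" and B="Lam * B"])
      fix k show "(\<Sum>i\<in>{N..<k}. Lam * e i) \<le> Lam * B"
        using esum[of k] Lam0 by (simp add: sum_distrib_left[symmetric] mult_left_mono)
    next
      fix n assume nN: "n \<ge> N"
      have nN': "Suc n \<ge> N" using nN by simp
      define P where "P = (\<Prod>l=m..n. lam l)"
      have Pe: "(\<Prod>l=m..Suc n. lam l) = P * lam (Suc n)" using nN Nm unfolding P_def by simp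
      have ph: "\<phi> (Suc n) = r n * \<phi> n" using nzN[OF nN] unfolding r_def by simp
      have rb: "\<bar>r n\<bar> \<le> mu (Suc n) + e n"
        using mu_pos[OF nN'] unfolding e_def by linarith
      have "lam (Suc n) * \<bar>r n\<bar> \<le> lam (Suc n) * (mu (Suc n) + e n)"
        using rb lam1[OF nN'] by (intro mult_left_mono) auto
      also have "\<dots> = 1 + lam (Suc n) * e n" using lm[OF nN'] by (simp add: algebra_simps)
      also have "\<dots> \<le> 1 + Lam * e n" using lamL[OF nN'] e0[of n] by (simp add: mult_right_mono)
      also have "\<dots> \<le> exp (Lam * e n)" by (rule exp_ge_add_one_self)
      finally have gr: "lam (Suc n) * \<bar>r n\<bar> \<le> exp (Lam * e n)" .
      have "\<bar>(\<Prod>l=m..Suc n. lam l) * \<phi> (Suc n)\<bar> = (lam (Suc n) * \<bar>r n\<bar>) * \<bar>P * \<phi> n\<bar>"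
        using Pe ph lam1[OF nN'] by (simp add: abs_mult)
      also have "\<dots> \<le> exp (Lam * e n) * \<bar>P * \<phi> n\<bar>" using gr by (intro mult_right_mono) auto
      finally show "\<bar>(\<Prod>l=m..Suc n. lam l) * \<phi> (Suc n)\<bar> \<le> exp (Lam * e n) * \<bar>(\<Prod>l=m..n. lam l) * \<phi> n\<bar>"
        unfolding P_def .
    qed
    then show ?thesis unfolding lam_def .
  qed
  show ?thesis using partA partB by blast
qed

end
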